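(* Let $R$ be a commutative ring with identity, let $S$ be an anti-Archimedean multiplicative subset of $R$, and let $M$ be a unitary $R$-module. Let $N=\{f\in R[X]\mid c(f)=R\}$. Then the following statements are equivalent: (1) $M$ is an $S$-Noetherian $R$-module; (2) $M[X]$ is an $S$-Noetherian $R[X]$-module; (3) $M[X]_N$ is an $S$-Noetherian $R[X]_N$-module.
   Context: A multiplicative subset $S$ of $R$ is not assumed saturated. $S$ is anti-Archimedean if for every $s\in S$, $\bigcap_{n\geq 1}s^nR\cap S\neq\emptyset$. For a unitary $R$-module $M$, a submodule $L$ of $M$ is $S$-finite if there exist $s\in S$ and a finitely generated submodule $F$ of $M$ with $Ls\subseteq F\subseteq L$; $M$ is $S$-Noetherian if every submodule of $M$ is $S$-finite. For $f\in R[X]$ the content ideal $c(f)$ is the ideal of $R$ generated by the coefficients of $f$; $N$ is a regular multiplicative subset of $R[X]$, and $M[X]_N$ is the localization of the $R[X]$-module $M[X]$ at $N$. In (2) and (3), $S$ is regarded as a multiplicative subset of $R[X]$, resp. $R[X]_N$, via the natural maps. *)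

theory Defs
  imports "HOL-Computational_Algebra.Polynomial"
begin

text \<open>A module is described by a ring carrier Rc, scalar multiplication sm,
  addition ad, zero z and module carrier C.\<close>

definition is_submodule ::
  "'r set \<Rightarrow> ('r \<Rightarrow> 'm \<Rightarrow> 'm) \<Rightarrow> ('m \<Rightarrow> 'm \<Rightarrow> 'm) \<Rightarrow> 'm \<Rightarrow> 'm set \<Rightarrow> 'm set \<Rightarrow> bool" where
  "is_submodule Rc sm ad z C L \<longleftrightarrow>
     L \<subseteq> C \<and> z \<in> L \<and> (\<forall>x\<in>L. \<forall>y\<in>L. ad x y \<in> L) \<and> (\<forall>r\<in>Rc. \<forall>x\<in>L. sm r x \<in> L)"

definition gen_submodule ::
  "'r set \<Rightarrow> ('r \<Rightarrow> 'm \<Rightarrow> 'm) \<Rightarrow> ('m \<Rightarrow> 'm \<Rightarrow> 'm) \<Rightarrow> 'm \<Rightarrow> 'm set \<Rightarrow> 'm set \<Rightarrow> 'm set" where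
  "gen_submodule Rc sm ad z C G = \<Inter>{L. is_submodule Rc sm ad z C L \<and> G \<subseteq> L}"

definition fg_submodule ::
  "'r set \<Rightarrow> ('r \<Rightarrow> 'm \<Rightarrow> 'm) \<Rightarrow> ('m \<Rightarrow> 'm \<Rightarrow> 'm) \<Rightarrow> 'm \<Rightarrow> 'm set \<Rightarrow> 'm set \<Rightarrow> bool" where
  "fg_submodule Rc sm ad z C F \<longleftrightarrow>
     (\<exists>G. finite G \<and> G \<subseteq> C \<and> F = gen_submodule Rc sm ad z C G)"

definition S_finite ::
  "'r set \<Rightarrow> ('r \<Rightarrow> 'm \<Rightarrow> 'm) \<Rightarrow> ('m \<Rightarrow> 'm \<Rightarrow> 'm) \<Rightarrow> 'm \<Rightarrow> 'm set \<Rightarrow> 'r set \<Rightarrow> 'm set \<Rightarrow> bool" where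
  "S_finite Rc sm ad z C S L \<longleftrightarrow>
     (\<exists>s\<in>S. \<exists>F. fg_submodule Rc sm ad z C F \<and> sm s ` L \<subseteq> F \<and> F \<subseteq> L)"

definition S_Noetherian ::
  "'r set \<Rightarrow> ('r \<Rightarrow> 'm \<Rightarrow> 'm) \<Rightarrow> ('m \<Rightarrow> 'm \<Rightarrow> 'm) \<Rightarrow> 'm \<Rightarrow> 'm set \<Rightarrow> 'r set \<Rightarrow> bool" where
  "S_Noetherian Rc sm ad z C S \<longleftrightarrow>
     (\<forall>L. is_submodule Rc sm ad z C L \<longrightarrow> S_finite Rc sm ad z C S L)"

definition mult_subset :: "'a::comm_ring_1 set \<Rightarrow> bool" where
  "mult_subset S \<longleftrightarrow> 1 \<in> S \<and> (\<forall>s\<in>S. \<forall>t\<in>S. s * t \<in> S)"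

definition anti_Archimedean :: "'a::comm_ring_1 set \<Rightarrow> bool" where
  "anti_Archimedean S \<longleftrightarrow>
     (\<forall>s\<in>S. (\<Inter>n\<in>{n. n \<ge> 1}. {s ^ n * r | r. True}) \<inter> S \<noteq> {})"

definition pscale :: "('a::comm_ring_1 \<Rightarrow> 'b::ab_group_add \<Rightarrow> 'b) \<Rightarrow> 'a poly \<Rightarrow> 'b poly \<Rightarrow> 'b poly" where
  "pscale sc f m = (\<Sum>i\<le>degree f. \<Sum>j\<le>degree m. monom (sc (coeff f i) (coeff m j)) (i + j))"

definition content_ideal :: "'a::comm_ring_1 poly \<Rightarrow> 'a set" where
  "content_ideal f = {\<Sum>i\<le>degree f. r i * coeff f i | r. True}"

definition NN :: "'a::comm_ring_1 poly set" where
  "NN = {f. content_ideal f = UNIV}"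

definition loc_rel :: "('r::comm_ring_1 \<Rightarrow> 'm::ab_group_add \<Rightarrow> 'm) \<Rightarrow> 'r set \<Rightarrow> 'm \<times> 'r \<Rightarrow> 'm \<times> 'r \<Rightarrow> bool" where
  "loc_rel sm T p q \<longleftrightarrow> snd p \<in> T \<and> snd q \<in> T \<and>
     (\<exists>w\<in>T. sm w (sm (snd q) (fst p) - sm (snd p) (fst q)) = 0)"

definition loc_cls :: "('r::comm_ring_1 \<Rightarrow> 'm::ab_group_add \<Rightarrow> 'm) \<Rightarrow> 'r set \<Rightarrow> 'm \<Rightarrow> 'r \<Rightarrow> ('m \<times> 'r) set" where
  "loc_cls sm T m u = {q. loc_rel sm T (m, u) q}"

definition loc_carrier :: "('r::comm_ring_1 \<Rightarrow> 'm::ab_group_add \<Rightarrow> 'm) \<Rightarrow> 'r set \<Rightarrow> ('m \<times> 'r) set set" where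
  "loc_carrier sm T = {loc_cls sm T m u | m u. u \<in> T}"

definition loc_rep :: "('m \<times> 'r) set \<Rightarrow> 'm \<times> 'r" where
  "loc_rep A = (SOME p. p \<in> A)"

definition loc_add :: "('r::comm_ring_1 \<Rightarrow> 'm::ab_group_add \<Rightarrow> 'm) \<Rightarrow> 'r set \<Rightarrow>
    ('m \<times> 'r) set \<Rightarrow> ('m \<times> 'r) set \<Rightarrow> ('m \<times> 'r) set" where
  "loc_add sm T A B = (case loc_rep A of (m, u) \<Rightarrow> case loc_rep B of (m', u') \<Rightarrow>
      loc_cls sm T (sm u' m + sm u m') (u * u'))"

definition loc_zero :: "('r::comm_ring_1 \<Rightarrow> 'm::ab_group_add \<Rightarrow> 'm) \<Rightarrow> 'r set \<Rightarrow> ('m \<times> 'r) set" where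
  "loc_zero sm T = loc_cls sm T 0 1"

definition loc_act :: "('r::comm_ring_1 \<Rightarrow> 'm::ab_group_add \<Rightarrow> 'm) \<Rightarrow> 'r set \<Rightarrow>
    ('r \<times> 'r) set \<Rightarrow> ('m \<times> 'r) set \<Rightarrow> ('m \<times> 'r) set" where
  "loc_act sm T A B = (case loc_rep A of (f, u) \<Rightarrow> case loc_rep B of (m, v) \<Rightarrow>
      loc_cls sm T (sm f m) (u * v))"

end

theory Submission
  imports Defs
begin

lemma gen_sub:
  assumes C: "is_submodule Rc sm ad z C C" and G: "G \<subseteq> C"
  shows "is_submodule Rc sm ad z C (gen_submodule Rc sm ad z C G)"
    and "G \<subseteq> gen_submodule Rc sm ad z C G"
    and "is_submodule Rc sm ad z C L \<Longrightarrow> G \<subseteq> L \<Longrightarrow> gen_submodule Rc sm ad z C G \<subseteq> L"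
proof -
  have ne: "C \<in> {L. is_submodule Rc sm ad z C L \<and> G \<subseteq> L}" using C G by auto
  show "is_submodule Rc sm ad z C (gen_submodule Rc sm ad z C G)"
    unfolding gen_submodule_def is_submodule_def
    using ne by (simp add: is_submodule_def) blast
  show "G \<subseteq> gen_submodule Rc sm ad z C G" unfolding gen_submodule_def by auto
  show "is_submodule Rc sm ad z C L \<Longrightarrow> G \<subseteq> L \<Longrightarrow> gen_submodule Rc sm ad z C G \<subseteq> L"
    unfolding gen_submodule_def by auto
qed

context module begin

lemma is_sub_UNIV: "is_submodule UNIV scale (+) 0 UNIV L \<longleftrightarrow> subspace L"
  by (auto simp: is_submodule_def subspace_def)

lemma gen_UNIV: "gen_submodule UNIV scale (+) 0 UNIV G = span G"
proof -
  have "span G \<in> {L. is_submodule UNIV scale (+) 0 UNIV L \<and> G \<subseteq> L}"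
    by (simp add: is_sub_UNIV span_superset)
  hence "gen_submodule UNIV scale (+) 0 UNIV G \<subseteq> span G"
    unfolding gen_submodule_def by blast
  moreover have "span G \<subseteq> gen_submodule UNIV scale (+) 0 UNIV G"
    unfolding gen_submodule_def by (auto simp: is_sub_UNIV intro: span_minimal[THEN subsetD])
  ultimately show ?thesis by blast
qed

lemma SN_UNIV: "S_Noetherian UNIV scale (+) 0 UNIV S \<longleftrightarrow>
  (\<forall>L. subspace L \<longrightarrow> (\<exists>s\<in>S. \<exists>G. finite G \<and> scale s ` L \<subseteq> span G \<and> span G \<subseteq> L))"
  unfolding S_Noetherian_def S_finite_def fg_submodule_def is_sub_UNIV gen_UNIV
  by (auto 0 0) (metis, metis)


lemma coeff_pscale:
  "coeff (pscale scale f m) n = (\<Sum>i\<le>n. scale (coeff f i) (coeff m (n - i)))"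
proof -
  define g where "g i = scale (coeff f i) (coeff m (n - i))" for i
  have inner: "(\<Sum>j\<le>degree m. (if i + j = n then scale (coeff f i) (coeff m j) else 0))
      = (if i \<le> n then g i else 0)" for i
  proof (cases "i \<le> n")
    case True
    have "(\<Sum>j\<le>degree m. (if i + j = n then scale (coeff f i) (coeff m j) else 0))
       = (\<Sum>j\<le>degree m. (if j = n - i then scale (coeff f i) (coeff m j) else 0))"
      using True by (intro sum.cong) auto
    also have "\<dots> = g i"
      by (cases "n - i \<le> degree m") (auto simp: g_def coeff_eq_0)
    finally show ?thesis using True by simp
  next
    case False
    then show ?thesis by (auto intro!: sum.neutral)
  qed
  have "coeff (pscale scale f m) n = (\<Sum>i\<le>degree f. (if i \<le> n then g i else 0))"
    unfolding pscale_def coeff_sum coeff_monom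
    by (intro sum.cong refl) (simp add: inner[symmetric] eq_commute[of "_ + _" n])
  also have "\<dots> = (\<Sum>i\<in>{i\<in>{..degree f}. i \<le> n}. g i)"
    by (subst sum.inter_filter) auto
  also have "\<dots> = (\<Sum>i\<le>n. g i)"
    by (rule sum.mono_neutral_left) (auto simp: g_def, metis coeff_eq_0 leI scale_zero_left)
  finally show ?thesis by (simp add: g_def)
qed


lemma triple_sum_lemma:
  fixes f :: "nat \<Rightarrow> nat \<Rightarrow> nat \<Rightarrow> 'c::comm_monoid_add"
  shows "(\<Sum>j=0..k. \<Sum>i=0..j. f i (j - i) (n - j)) =
         (\<Sum>j=0..k. \<Sum>i=0..k - j. f j i (n - j - i))"
  by (induct k) (simp_all add: Suc_diff_le sum.distrib add.assoc)

lemma pscale_module: "module (pscale scale)"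
proof
  fix a b :: "'a poly" and x y :: "'b poly"
  show "pscale scale a (x + y) = pscale scale a x + pscale scale a y"
    by (simp add: poly_eq_iff coeff_pscale scale_right_distrib sum.distrib)
  show "pscale scale (a + b) x = pscale scale a x + pscale scale b x"
    by (simp add: poly_eq_iff coeff_pscale scale_left_distrib sum.distrib)
  show "pscale scale 1 x = x"
  proof (rule poly_eqI)
    fix n
    have "(\<Sum>i\<le>n. scale (coeff 1 i) (coeff x (n - i))) = (\<Sum>i\<le>n. if i = 0 then coeff x (n - i) else 0)"
      by (intro sum.cong) auto
    then show "coeff (pscale scale 1 x) n = coeff x n" by (simp add: coeff_pscale)
  qed
  show "pscale scale a (pscale scale b x) = pscale scale (a * b) x"
  proof (rule poly_eqI)
    fix n
    define f where "f i j l = scale (coeff a i * coeff b j) (coeff x l)" for i j l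
    have "coeff (pscale scale a (pscale scale b x)) n
        = (\<Sum>i=0..n. \<Sum>j=0..n - i. f i j (n - i - j))"
      by (simp add: coeff_pscale scale_sum_right f_def atLeast0AtMost diff_diff_add)
    also have "\<dots> = (\<Sum>k=0..n. \<Sum>i=0..k. f i (k - i) (n - k))"
      by (rule triple_sum_lemma[symmetric])
    also have "\<dots> = coeff (pscale scale (a * b) x) n"
      by (simp add: coeff_pscale coeff_mult scale_sum_left f_def atLeast0AtMost)
    finally show "coeff (pscale scale a (pscale scale b x)) n = coeff (pscale scale (a * b) x) n" .
  qed
qed

lemma coeff_pscale_const: "coeff (pscale scale [:r:] p) n = scale r (coeff p n)"
  by (simp add: coeff_pscale sum.atMost_shift coeff_pCons split: nat.splits)

lemma coeff_pscale_monom: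
  "coeff (pscale scale (monom c k) p) n = (if k \<le> n then scale c (coeff p (n - k)) else 0)"
  by (simp add: coeff_pscale coeff_monom if_distrib[of "\<lambda>r. scale r _"] cong: if_cong)

lemma coeff_pscale_constR: "coeff (pscale scale f [:m:]) n = scale (coeff f n) m"
proof -
  have "(\<Sum>i\<le>n. scale (coeff f i) (coeff [:m:] (n - i))) = (\<Sum>i\<le>n. if i = n then scale (coeff f i) m else 0)"
    by (intro sum.cong) (auto simp: coeff_pCons split: nat.splits)
  then show ?thesis by (simp add: coeff_pscale)
qed

lemma pscale_const_const: "pscale scale [:r:] [:m:] = [:scale r m:]"
  by (simp add: poly_eq_iff coeff_pscale_const coeff_pCons split: nat.splits)


end

locale pmod = module scale for scale :: "'a::comm_ring_1 \<Rightarrow> 'b::ab_group_add \<Rightarrow> 'b"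

sublocale pmod \<subseteq> P: module "pscale scale"
  by (rule pscale_module)

context pmod
begin

abbreviation ps where "ps \<equiv> pscale scale"

lemma ps_cc: "ps [:a:] (ps [:b:] x) = ps [:a * b:] x"
  by (simp add: mult.commute)

lemma ps_one: "ps [:1:] x = x"
  using P.scale_one by (simp add: one_pCons[symmetric])

lemma polyK: "subspace K \<Longrightarrow> P.subspace {p. \<forall>n. coeff p n \<in> K}"
  unfolding P.subspace_def
  by (auto simp: coeff_pscale subspace_0 subspace_add intro!: subspace_sum subspace_scale)

lemma two_imp_one:
  assumes "S_Noetherian UNIV ps (+) 0 UNIV ((\<lambda>s. [:s:]) ` S)"
  shows "S_Noetherian UNIV scale (+) 0 UNIV S"
  unfolding SN_UNIV
proof (intro allI impI)
  fix L assume L: "subspace L"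
  define K where "K = {p. \<forall>n. coeff p n \<in> L}"
  have K: "P.subspace K" unfolding K_def by (rule polyK[OF L])
  from assms[unfolded P.SN_UNIV, rule_format, OF K] obtain s G where
    s: "s \<in> S" and G: "finite G" "ps [:s:] ` K \<subseteq> P.span G" "P.span G \<subseteq> K" by blast
  define A where "A = (\<Union>g\<in>G. (\<lambda>n. coeff g n) ` {..degree g})"
  have fA: "finite A" unfolding A_def using G by auto
  have GK: "G \<subseteq> K" using G P.span_superset by blast
  have AL: "A \<subseteq> L" using GK unfolding A_def K_def by auto
  have spG: "P.span G \<subseteq> {p. \<forall>n. coeff p n \<in> span A}"
  proof (rule P.span_minimal)
    show "P.subspace {p. \<forall>n. coeff p n \<in> span A}" by (rule polyK) simp
    show "G \<subseteq> {p. \<forall>n. coeff p n \<in> span A}"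
    proof safe
      fix g n assume g: "g \<in> G"
      show "coeff g n \<in> span A"
      proof (cases "n \<le> degree g")
        case True then show ?thesis using g by (auto simp: A_def intro!: span_base)
      next
        case False then show ?thesis by (simp add: coeff_eq_0 span_zero)
      qed
    qed
  qed
  have "scale s ` L \<subseteq> span A"
  proof safe
    fix l assume l: "l \<in> L"
    have "[:l:] \<in> K" using l by (auto simp: K_def coeff_pCons subspace_0[OF L] split: nat.splits)
    hence "[:scale s l:] \<in> P.span G" using G(2) by (auto simp: pscale_const_const)
    hence "coeff [:scale s l:] 0 \<in> span A" using spG by blast
    thus "scale s l \<in> span A" by simp
  qed
  moreover have "span A \<subseteq> L" using AL L by (rule span_minimal)
  ultimately show "\<exists>s\<in>S. \<exists>G. finite G \<and> scale s ` L \<subseteq> span G \<and> span G \<subseteq> L"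
    using s fA by blast
qed


definition Rsub :: "'b poly set \<Rightarrow> bool" where
  "Rsub K \<longleftrightarrow> 0 \<in> K \<and> (\<forall>x\<in>K. \<forall>y\<in>K. x + y \<in> K) \<and> (\<forall>r. \<forall>x\<in>K. ps [:r:] x \<in> K)"

lemma Rsub_diff: "Rsub K \<Longrightarrow> x \<in> K \<Longrightarrow> y \<in> K \<Longrightarrow> x - y \<in> K"
proof -
  assume K: "Rsub K" "x \<in> K" "y \<in> K"
  have "ps [:-1:] y = ps (- [:1:]) y" by simp
  also have "\<dots> = - y" by (simp only: P.scale_minus_left ps_one)
  finally have "ps [:-1:] y = - y" .
  hence "x + ps [:-1:] y = x - y" by simp
  with K show ?thesis unfolding Rsub_def by metis
qed

lemma Rsub_sum: "Rsub K \<Longrightarrow> (\<And>a. a \<in> A \<Longrightarrow> f a \<in> K) \<Longrightarrow> sum f A \<in> K"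
  by (induct A rule: infinite_finite_induct) (auto simp: Rsub_def)

lemma SN_Pd:
  assumes SN: "\<forall>L. subspace L \<longrightarrow> (\<exists>s\<in>S. \<exists>G. finite G \<and> scale s ` L \<subseteq> span G \<and> span G \<subseteq> L)"
    and mS: "mult_subset S"
  shows "Rsub K \<Longrightarrow> (\<forall>p\<in>K. \<forall>k\<ge>d. coeff p k = 0) \<Longrightarrow>
     \<exists>s\<in>S. \<exists>B. finite B \<and> B \<subseteq> K \<and> (\<lambda>p. ps [:s:] p) ` K \<subseteq> P.span B"
proof (induction d arbitrary: K)
  case 0
  have "1 \<in> S" using mS by (simp add: mult_subset_def)
  moreover have "(\<lambda>p. ps [:1:] p) ` K \<subseteq> P.span {}"
    using 0 by (auto simp: ps_one poly_eq_iff P.span_zero)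
  ultimately show ?case by blast
next
  case (Suc d)
  note K = Suc.prems(1) and Kd = Suc.prems(2)
  define Lp where "Lp = (\<lambda>p. coeff p d) ` K"
  have Lp: "subspace Lp"
    unfolding subspace_def Lp_def
  proof (intro conjI ballI allI)
    show "0 \<in> (\<lambda>p. coeff p d) ` K" using K by (force simp: Rsub_def)
    fix x y assume "x \<in> (\<lambda>p. coeff p d) ` K" "y \<in> (\<lambda>p. coeff p d) ` K"
    then obtain p q where "p \<in> K" "q \<in> K" "x = coeff p d" "y = coeff q d" by auto
    thus "x + y \<in> (\<lambda>p. coeff p d) ` K" using K
      by (intro image_eqI[of _ _ "p + q"]) (auto simp: Rsub_def)
  next
    fix c x assume "x \<in> (\<lambda>p. coeff p d) ` K"
    then obtain p where "p \<in> K" "x = coeff p d" by auto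
    thus "scale c x \<in> (\<lambda>p. coeff p d) ` K" using K
      by (intro image_eqI[of _ _ "ps [:c:] p"]) (auto simp: Rsub_def coeff_pscale_const)
  qed
  from SN[rule_format, OF Lp] obtain s1 A where
    s1: "s1 \<in> S" and A: "finite A" "scale s1 ` Lp \<subseteq> span A" "span A \<subseteq> Lp" by blast
  have "\<forall>a\<in>A. \<exists>p\<in>K. coeff p d = a" using A(3) span_superset unfolding Lp_def by blast
  then obtain la where la: "\<And>a. a \<in> A \<Longrightarrow> la a \<in> K \<and> coeff (la a) d = a" by metis
  define K0 where "K0 = {p\<in>K. coeff p d = 0}"
  have K0: "Rsub K0" using K unfolding K0_def Rsub_def by (auto simp: coeff_pscale_const)
  have K0d: "\<forall>p\<in>K0. \<forall>k\<ge>d. coeff p k = 0"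
    using Kd unfolding K0_def by (metis (mono_tags, lifting) Suc_le_eq le_neq_implies_less mem_Collect_eq)
  from Suc.IH[OF K0 K0d] obtain s2 B0 where
    s2: "s2 \<in> S" and B0: "finite B0" "B0 \<subseteq> K0" "(\<lambda>p. ps [:s2:] p) ` K0 \<subseteq> P.span B0" by blast
  define B where "B = B0 \<union> la ` A"
  have fB: "finite B" using A B0 by (simp add: B_def)
  have BK: "B \<subseteq> K" using B0 la unfolding B_def K0_def by auto
  have "(\<lambda>p. ps [:s2 * s1:] p) ` K \<subseteq> P.span B"
  proof safe
    fix p assume p: "p \<in> K"
    have "scale s1 (coeff p d) \<in> span A" using A(2) p unfolding Lp_def by blast
    then obtain u where u: "scale s1 (coeff p d) = (\<Sum>a\<in>A. scale (u a) a)"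
      using span_finite[OF A(1)] by auto
    define q where "q = ps [:s1:] p - (\<Sum>a\<in>A. ps [:u a:] (la a))"
    have qK: "q \<in> K" unfolding q_def using K p la
      by (intro Rsub_diff Rsub_sum) (auto simp: Rsub_def)
    have "coeff q d = scale s1 (coeff p d) - (\<Sum>a\<in>A. scale (u a) a)"
      unfolding q_def using la by (simp add: coeff_sum coeff_pscale_const)
    hence "q \<in> K0" using qK u unfolding K0_def by simp
    hence "ps [:s2:] q \<in> P.span B0" using B0(3) by blast
    hence 1: "ps [:s2:] q \<in> P.span B" using P.span_mono[of B0 B] unfolding B_def by blast
    have 2: "(\<Sum>a\<in>A. ps [:s2 * u a:] (la a)) \<in> P.span B"
      by (intro P.span_sum P.span_scale P.span_base) (auto simp: B_def)
    have "ps [:s2 * s1:] p = ps [:s2:] q + (\<Sum>a\<in>A. ps [:s2 * u a:] (la a))"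
      unfolding q_def P.scale_right_diff_distrib P.scale_sum_right ps_cc
      by (rule diff_add_cancel[symmetric])
    thus "ps [:s2 * s1:] p \<in> P.span B" using P.span_add[OF 1 2] by simp
  qed
  moreover have "s2 * s1 \<in> S" using mS s1 s2 by (simp add: mult_subset_def)
  ultimately show ?case using fB BK by blast
qed


lemma aA_get:
  assumes "anti_Archimedean S" "s \<in> S"
  shows "\<exists>t\<in>S. \<forall>n\<ge>1. \<exists>r. t = s ^ n * r"
proof -
  have "(\<Inter>n\<in>{n. n \<ge> 1}. {s ^ n * r | r. True}) \<inter> S \<noteq> {}"
    using assms unfolding anti_Archimedean_def by blast
  then obtain t where "t \<in> (\<Inter>n\<in>{n. n \<ge> 1}. {s ^ n * r | r. True}) \<inter> S"
    by (meson ex_in_conv)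
  then show ?thesis by auto
qed

lemma shift_lem:
  assumes "\<forall>k>n. coeff p k = 0"
  shows "coeff (ps (monom 1 m) p) (n + m) = coeff p n" and "\<forall>k>n+m. coeff (ps (monom 1 m) p) k = 0"
  using assms by (auto simp: coeff_pscale_monom)

lemma abc: "(a::'b poly) - b - c = a - (c + b)"
  by (simp add: algebra_simps)

lemma one_imp_two:
  assumes SN1: "S_Noetherian UNIV scale (+) 0 UNIV S" and mS: "mult_subset S"
    and aA: "anti_Archimedean S"
  shows "S_Noetherian UNIV ps (+) 0 UNIV ((\<lambda>s. [:s:]) ` S)"
  unfolding P.SN_UNIV
proof (intro allI impI)
  fix J assume J: "P.subspace J"
  have SN: "\<forall>L. subspace L \<longrightarrow> (\<exists>s\<in>S. \<exists>G. finite G \<and> scale s ` L \<subseteq> span G \<and> span G \<subseteq> L)"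
    using SN1 by (simp add: SN_UNIV)
  define I where "I = {coeff p n | p n. p \<in> J \<and> (\<forall>k>n. coeff p k = 0)}"
  have I: "subspace I"
    unfolding subspace_def
  proof (intro conjI ballI allI)
    show "0 \<in> I" unfolding I_def using P.subspace_0[OF J]
      by (intro CollectI exI[of _ 0] exI[of _ "0::nat"]) simp
    fix x y assume "x \<in> I" "y \<in> I"
    then obtain p n q m where pq: "p \<in> J" "\<forall>k>n. coeff p k = 0" "x = coeff p n"
       "q \<in> J" "\<forall>k>m. coeff q k = 0" "y = coeff q m" unfolding I_def by blast
    define p' where "p' = ps (monom 1 m) p"
    define q' where "q' = ps (monom 1 n) q"
    have "p' + q' \<in> J" unfolding p'_def q'_def using J pq
      by (intro P.subspace_add P.subspace_scale) auto
    moreover have "coeff (p' + q') (n + m) = x + y"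
      using shift_lem(1)[OF pq(2), of m] shift_lem(1)[OF pq(5), of n] pq
      by (simp add: p'_def q'_def add.commute)
    moreover have "\<forall>k>n+m. coeff (p' + q') k = 0"
      using shift_lem(2)[OF pq(2), of m] shift_lem(2)[OF pq(5), of n]
      by (simp add: p'_def q'_def add.commute)
    ultimately show "x + y \<in> I" unfolding I_def
      by (intro CollectI exI[of _ "p' + q'"] exI[of _ "n + m"]) simp
  next
    fix c x assume "x \<in> I"
    then obtain p n where p: "p \<in> J" "\<forall>k>n. coeff p k = 0" "x = coeff p n" unfolding I_def by blast
    have "ps [:c:] p \<in> J" using J p by (intro P.subspace_scale) auto
    moreover have "coeff (ps [:c:] p) n = scale c x" using p by (simp add: coeff_pscale_const)
    moreover have "\<forall>k>n. coeff (ps [:c:] p) k = 0" using p by (simp add: coeff_pscale_const)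
    ultimately show "scale c x \<in> I" unfolding I_def
      by (intro CollectI exI[of _ "ps [:c:] p"] exI[of _ n]) simp
  qed
  from SN[rule_format, OF I] obtain s A where
    s: "s \<in> S" and A: "finite A" "scale s ` I \<subseteq> span A" "span A \<subseteq> I" by blast
  have "\<forall>a\<in>A. \<exists>p n. p \<in> J \<and> (\<forall>k>n. coeff p k = 0) \<and> coeff p n = a"
    using A(3) span_superset unfolding I_def by blast
  then obtain pa na where pa: "\<And>a. a \<in> A \<Longrightarrow> pa a \<in> J \<and> (\<forall>k>na a. coeff (pa a) k = 0) \<and> coeff (pa a) (na a) = a"
    by metis
  define d where "d = (\<Sum>a\<in>A. na a)"
  have nad: "a \<in> A \<Longrightarrow> na a \<le> d" for a unfolding d_def using A(1) by (auto intro: member_le_sum)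
  define f where "f a = ps (monom 1 (d - na a)) (pa a)" for a
  have fJ: "a \<in> A \<Longrightarrow> f a \<in> J" for a unfolding f_def using J pa by (intro P.subspace_scale) auto
  have fd: "a \<in> A \<Longrightarrow> coeff (f a) d = a" for a
    using shift_lem(1)[of "na a" "pa a" "d - na a"] pa[of a] nad[of a] by (simp add: f_def)
  have fz: "a \<in> A \<Longrightarrow> \<forall>k>d. coeff (f a) k = 0" for a
    using shift_lem(2)[of "na a" "pa a" "d - na a"] pa[of a] nad[of a] by (simp add: f_def)
  define K where "K = {p\<in>J. \<forall>k\<ge>d. coeff p k = 0}"
  have K: "Rsub K" unfolding Rsub_def K_def using J
    by (auto simp: coeff_pscale_const P.subspace_0 P.subspace_add P.subspace_scale)
  have Kd: "\<forall>p\<in>K. \<forall>k\<ge>d. coeff p k = 0" unfolding K_def by blast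
  from SN_Pd[OF SN mS K Kd] obtain s' B where
    s': "s' \<in> S" and B: "finite B" "B \<subseteq> K" "(\<lambda>p. ps [:s':] p) ` K \<subseteq> P.span B"
    by blast
  from aA_get[OF aA s] obtain t where t: "t \<in> S" "\<And>n. n \<ge> 1 \<Longrightarrow> \<exists>r. t = s ^ n * r"
    by blast
  define V where "V = P.span (f ` A)"
  have VJ: "V \<subseteq> J" unfolding V_def using J fJ by (intro P.span_minimal) auto
  have claim: "\<forall>p\<in>J. (\<forall>k\<ge>d+n. coeff p k = 0) \<longrightarrow> (\<exists>v\<in>V. \<forall>k\<ge>d. coeff (ps [:s^n:] p - v) k = 0)" for n
  proof (induction n)
    case 0
    show ?case by (intro ballI impI bexI[of _ 0]) (auto simp: V_def ps_one P.span_zero)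
  next
    case (Suc n)
    show ?case
    proof (intro ballI impI)
      fix p assume p: "p \<in> J" and pz: "\<forall>k\<ge>d + Suc n. coeff p k = 0"
      have "coeff p (d + n) \<in> I" unfolding I_def using p pz
        by (intro CollectI exI[of _ p] exI[of _ "d + n"]) auto
      hence "scale s (coeff p (d + n)) \<in> span A" using A(2) by blast
      then obtain u where u: "scale s (coeff p (d + n)) = (\<Sum>a\<in>A. scale (u a) a)"
        using span_finite[OF A(1)] by auto
      define p' where "p' = ps [:s:] p - (\<Sum>a\<in>A. ps (monom (u a) n) (f a))"
      have p'J: "p' \<in> J" unfolding p'_def using J p fJ
        by (intro P.subspace_diff P.subspace_sum P.subspace_scale) auto
      have p'z: "\<forall>k\<ge>d+n. coeff p' k = 0"
      proof (intro allI impI)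
        fix k assume k: "d + n \<le> k"
        have ck: "coeff p' k = scale s (coeff p k) - (\<Sum>a\<in>A. scale (u a) (coeff (f a) (k - n)))"
          unfolding p'_def using k by (simp add: coeff_sum coeff_pscale_const coeff_pscale_monom)
        show "coeff p' k = 0"
        proof (cases "k = d + n")
          case True
          have "(\<Sum>a\<in>A. scale (u a) (coeff (f a) (k - n))) = (\<Sum>a\<in>A. scale (u a) a)"
            using True fd by (intro sum.cong) auto
          then show ?thesis using ck u True by simp
        next
          case False
          hence "k \<ge> d + Suc n" "k - n > d" using k by auto
          hence "(\<Sum>a\<in>A. scale (u a) (coeff (f a) (k - n))) = 0"
            using fz by (intro sum.neutral) auto
          then show ?thesis using ck pz \<open>k \<ge> d + Suc n\<close> by simp
        qed
      qed
      from Suc.IH p'J p'z obtain v' where v': "v' \<in> V" "\<forall>k\<ge>d. coeff (ps [:s^n:] p' - v') k = 0"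
        by blast
      define v where "v = v' + (\<Sum>a\<in>A. ps [:s^n:] (ps (monom (u a) n) (f a)))"
      have "(\<Sum>a\<in>A. ps [:s^n:] (ps (monom (u a) n) (f a))) \<in> V" unfolding V_def
        by (intro P.span_sum P.span_scale P.span_base) auto
      hence vV: "v \<in> V" unfolding v_def using v'(1) P.span_add unfolding V_def by blast
      have "ps [:s^n:] p' = ps [:s ^ Suc n:] p - (\<Sum>a\<in>A. ps [:s^n:] (ps (monom (u a) n) (f a)))"
        unfolding p'_def P.scale_right_diff_distrib P.scale_sum_right ps_cc power_Suc2 by (rule refl)
      hence "ps [:s^n:] p' - v' = ps [:s ^ Suc n:] p - v" unfolding v_def by (simp only: abc)
      thus "\<exists>v\<in>V. \<forall>k\<ge>d. coeff (ps [:s ^ Suc n:] p - v) k = 0" using vV v'(2) by metis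
    qed
  qed
  have main: "(\<lambda>p. ps [:s' * t:] p) ` J \<subseteq> P.span (f ` A \<union> B)"
  proof safe
    fix p assume p: "p \<in> J"
    define n where "n = Suc (degree p)"
    have "\<forall>k\<ge>d+n. coeff p k = 0" unfolding n_def by (auto intro!: coeff_eq_0)
    with claim[of n] p obtain v where v: "v \<in> V" "\<forall>k\<ge>d. coeff (ps [:s^n:] p - v) k = 0" by blast
    obtain r where r: "t = s ^ n * r" using t(2)[of n] unfolding n_def by auto
    define k0 where "k0 = ps [:s^n:] p - v"
    have "k0 \<in> J" unfolding k0_def using J p v VJ by (intro P.subspace_diff P.subspace_scale) auto
    hence "ps [:r:] k0 \<in> K" unfolding K_def using J v(2)
      by (auto simp: k0_def coeff_pscale_const intro: P.subspace_scale)
    hence 1: "ps [:s':] (ps [:r:] k0) \<in> P.span (f ` A \<union> B)"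
      using B(3) P.span_mono[of B "f ` A \<union> B"] by blast
    have 2: "ps [:s':] (ps [:r:] v) \<in> P.span (f ` A \<union> B)"
      using v(1) P.span_mono[of "f ` A" "f ` A \<union> B"] unfolding V_def
      by (blast intro: P.span_scale)
    have e1: "v + k0 = ps [:s^n:] p" by (simp add: k0_def)
    have e2: "s' * t = s' * (r * s^n)" by (simp add: r ac_simps)
    have "ps [:s' * t:] p = ps [:s':] (ps [:r:] (v + k0))"
      unfolding e1 e2 ps_cc by (rule refl)
    also have "\<dots> = ps [:s':] (ps [:r:] v) + ps [:s':] (ps [:r:] k0)"
      by (simp only: P.scale_right_distrib)
    finally show "ps [:s' * t:] p \<in> P.span (f ` A \<union> B)" using P.span_add[OF 2 1] by simp
  qed
  have fin: "finite (f ` A \<union> B)" using A(1) B(1) by simp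
  have sub: "P.span (f ` A \<union> B) \<subseteq> J" using J fJ B(2) unfolding K_def
    by (intro P.span_minimal) auto
  have "s' * t \<in> S" using mS s' t(1) by (simp add: mult_subset_def)
  then show "\<exists>s\<in>(\<lambda>s. [:s:]) ` S. \<exists>G. finite G \<and> ps s ` J \<subseteq> P.span G \<and> P.span G \<subseteq> J"
    using main fin sub by blast
qed

end

section \<open>The multiplicative set NN\<close>

lemma NN_iff: "f \<in> NN \<longleftrightarrow> (\<exists>r. (\<Sum>i\<le>degree f. r i * coeff f i) = 1)"
proof
  assume "f \<in> NN"
  hence "1 \<in> content_ideal f" by (simp add: NN_def)
  thus "\<exists>r. (\<Sum>i\<le>degree f. r i * coeff f i) = 1" by (auto simp: content_ideal_def)
next
  assume "\<exists>r. (\<Sum>i\<le>degree f. r i * coeff f i) = 1"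
  then obtain r where r: "(\<Sum>i\<le>degree f. r i * coeff f i) = 1" by blast
  have "x \<in> content_ideal f" for x
  proof -
    have "(\<Sum>i\<le>degree f. (x * r i) * coeff f i) = x * (\<Sum>i\<le>degree f. r i * coeff f i)"
      by (simp add: sum_distrib_left mult.assoc)
    hence "x = (\<Sum>i\<le>degree f. (x * r i) * coeff f i)" using r by simp
    thus ?thesis unfolding content_ideal_def by (intro CollectI exI[of _ "\<lambda>i. x * r i"]) simp
  qed
  thus "f \<in> NN" by (auto simp: NN_def)
qed

lemma one_NN: "1 \<in> NN"
  unfolding NN_iff by (intro exI[of _ "\<lambda>_. 1"]) simp

definition idl :: "'a::comm_ring_1 set \<Rightarrow> bool" where
  "idl I \<longleftrightarrow> 0 \<in> I \<and> (\<forall>x\<in>I. \<forall>y\<in>I. x + y \<in> I) \<and> (\<forall>c. \<forall>x\<in>I. c * x \<in> I)"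

definition cu :: "'a::comm_ring_1 set \<Rightarrow> 'a poly \<Rightarrow> bool" where
  "cu I f \<longleftrightarrow> (\<exists>x\<in>I. \<exists>r. 1 = x + (\<Sum>i\<le>degree f. r i * coeff f i))"

lemma idl_sum: "idl I \<Longrightarrow> (\<And>a. a \<in> A \<Longrightarrow> h a \<in> I) \<Longrightarrow> sum h A \<in> I"
  by (induct A rule: infinite_finite_induct) (auto simp: idl_def)

lemma idl_add: "idl I \<Longrightarrow> x \<in> I \<Longrightarrow> y \<in> I \<Longrightarrow> x + y \<in> I"
  and idl_mult: "idl I \<Longrightarrow> x \<in> I \<Longrightarrow> c * x \<in> I"
  by (auto simp: idl_def)

lemma cu_deg0:
  assumes I: "idl I" and d: "degree f = 0" and cf: "cu I f" and cg: "cu I g"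
    and fg: "\<forall>n. coeff (f * g) n \<in> I"
  shows "1 \<in> I"
proof -
  define a where "a = coeff f 0"
  obtain c where "f = [:c:]" using d by (rule degree_eq_zeroE)
  hence f: "f = [:a:]" unfolding a_def by simp
  from cf obtain x r where x: "x \<in> I" "1 = x + r 0 * a" unfolding cu_def f by auto
  from cg obtain y q where y: "y \<in> I" "1 = y + (\<Sum>j\<le>degree g. q j * coeff g j)" unfolding cu_def by auto
  have ab: "a * coeff g j \<in> I" for j using fg[rule_format, of j] by (simp add: f)
  have "r 0 * a = r 0 * a * (y + (\<Sum>j\<le>degree g. q j * coeff g j))" using y by simp
  also have "\<dots> = (r 0 * a) * y + (\<Sum>j\<le>degree g. (q j * r 0) * (a * coeff g j))"
    by (simp add: algebra_simps sum_distrib_left)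
  finally have e: "r 0 * a = (r 0 * a) * y + (\<Sum>j\<le>degree g. (q j * r 0) * (a * coeff g j))" .
  have s: "(\<Sum>j\<le>degree g. (q j * r 0) * (a * coeff g j)) \<in> I"
    by (rule idl_sum[OF I]) (rule idl_mult[OF I ab])
  have "r 0 * a \<in> I" using idl_add[OF I idl_mult[OF I y(1), of "r 0 * a"] s] e by simp
  thus "1 \<in> I" using idl_add[OF I x(1)] x(2) by metis
qed

lemma cu_main:
  "idl I \<Longrightarrow> cu I f \<Longrightarrow> cu I g \<Longrightarrow> (\<forall>n. coeff (f * g) n \<in> I) \<Longrightarrow> 1 \<in> I"
proof (induction "degree f + degree g" arbitrary: f g I rule: less_induct)
  case less
  note I = less.prems(1) and cf = less.prems(2) and cg = less.prems(3) and fg = less.prems(4)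
  show ?case
  proof (cases "degree f = 0")
    case True then show ?thesis using cu_deg0 I cf cg fg by blast
  next
    case Fpos: False
    show ?thesis
    proof (cases "degree g = 0")
      case True then show ?thesis using cu_deg0[OF I True cg cf] fg by (simp add: mult.commute)
    next
      case Gpos: False
      obtain a0 f' where f: "f = pCons a0 f'" by (cases f) auto
      have f'0: "f' \<noteq> 0" using Fpos f by auto
      have df: "degree f = Suc (degree f')" using f f'0 by simp
      define J where "J = {x + c * a0 | x c. x \<in> I}"
      have IJ: "I \<subseteq> J"
      proof
        fix x assume "x \<in> I"
        thus "x \<in> J" unfolding J_def by (intro CollectI exI[of _ x] exI[of _ 0]) simp
      qed
      have J: "idl J" unfolding idl_def J_def
      proof (intro conjI ballI allI)
        show "0 \<in> {x + c * a0 |x c. x \<in> I}" using I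
          by (auto simp: idl_def intro!: exI[of _ "0::'a"])
        fix u v assume "u \<in> {x + c * a0 |x c. x \<in> I}" "v \<in> {x + c * a0 |x c. x \<in> I}"
        then obtain x c y e where "x \<in> I" "y \<in> I" "u = x + c * a0" "v = y + e * a0" by auto
        thus "u + v \<in> {x + c * a0 |x c. x \<in> I}" using I
          by (intro CollectI exI[of _ "x + y"] exI[of _ "c + e"]) (auto simp: algebra_simps idl_def)
      next
        fix c u assume "u \<in> {x + c * a0 |x c. x \<in> I}"
        then obtain x e where "x \<in> I" "u = x + e * a0" by auto
        thus "c * u \<in> {x + c * a0 |x c. x \<in> I}" using I
          by (intro CollectI exI[of _ "c * x"] exI[of _ "c * e"]) (auto simp: algebra_simps idl_def)
      qed
      have cf': "cu J f'"
      proof -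
        from cf obtain x r where x: "x \<in> I" "1 = x + (\<Sum>i\<le>degree f. r i * coeff f i)"
          unfolding cu_def by auto
        have "(\<Sum>i\<le>Suc (degree f'). r i * coeff f i) = r 0 * a0 + (\<Sum>i\<le>degree f'. r (Suc i) * coeff f' i)"
          unfolding sum.atMost_Suc_shift by (simp add: f)
        hence "1 = (x + r 0 * a0) + (\<Sum>i\<le>degree f'. r (Suc i) * coeff f' i)"
          using x(2) unfolding df by (simp add: add.assoc)
        moreover have "x + r 0 * a0 \<in> J" using x unfolding J_def by blast
        ultimately show ?thesis unfolding cu_def by (intro bexI[of _ "x + r 0 * a0"] exI[of _ "\<lambda>i. r (Suc i)"])
      qed
      have cgJ: "cu J g" using cg IJ unfolding cu_def by blast
      have fgJ: "\<forall>n. coeff (f' * g) n \<in> J"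
      proof
        fix n
        have "coeff (f * g) (Suc n) = a0 * coeff g (Suc n) + coeff (f' * g) n"
          by (simp add: f)
        hence "coeff (f' * g) n = coeff (f * g) (Suc n) + (- coeff g (Suc n)) * a0" by simp
        thus "coeff (f' * g) n \<in> J" using fg unfolding J_def by blast
      qed
      have "degree f' + degree g < degree f + degree g" using df by simp
      from less.hyps[OF this J cf' cgJ fgJ] have "1 \<in> J" .
      then obtain x1 c1 where x1: "x1 \<in> I" "1 = x1 + c1 * a0" unfolding J_def by auto
      obtain b0 g' where g: "g = pCons b0 g'" by (cases g) auto
      have g'0: "g' \<noteq> 0" using Gpos g by auto
      have dg: "degree g = Suc (degree g')" using g g'0 by simp
      have "a0 * b0 = coeff (f * g) 0" by (simp add: f g)
      hence ab: "a0 * b0 \<in> I" using fg by simp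
      have "b0 = (x1 + c1 * a0) * b0" using x1(2) by simp
      hence "b0 = b0 * x1 + c1 * (a0 * b0)" by (simp add: algebra_simps)
      hence b0I: "b0 \<in> I" using idl_add[OF I idl_mult[OF I x1(1), of b0] idl_mult[OF I ab, of c1]] by simp
      have cg': "cu I g'"
      proof -
        from cg obtain y q where y: "y \<in> I" "1 = y + (\<Sum>j\<le>degree g. q j * coeff g j)"
          unfolding cu_def by auto
        have "(\<Sum>j\<le>Suc (degree g'). q j * coeff g j) = q 0 * b0 + (\<Sum>j\<le>degree g'. q (Suc j) * coeff g' j)"
          unfolding sum.atMost_Suc_shift by (simp add: g)
        hence "1 = (y + q 0 * b0) + (\<Sum>j\<le>degree g'. q (Suc j) * coeff g' j)"
          using y(2) unfolding dg by (simp add: add.assoc)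
        moreover have "y + q 0 * b0 \<in> I" using idl_add[OF I y(1) idl_mult[OF I b0I]] .
        ultimately show ?thesis unfolding cu_def by (intro bexI[of _ "y + q 0 * b0"] exI[of _ "\<lambda>j. q (Suc j)"])
      qed
      have fg': "\<forall>n. coeff (f * g') n \<in> I"
      proof
        fix n
        have "coeff (f * g) (Suc n) = b0 * coeff f (Suc n) + coeff (f * g') n"
          by (simp add: g)
        hence "coeff (f * g') n = coeff (f * g) (Suc n) + (- coeff f (Suc n)) * b0" by simp
        thus "coeff (f * g') n \<in> I" using idl_add[OF I fg[rule_format, of "Suc n"] idl_mult[OF I b0I, of "- coeff f (Suc n)"]] by metis
      qed
      have "degree f + degree g' < degree f + degree g" using dg by simp
      from less.hyps[OF this I cf cg' fg'] show "1 \<in> I" .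
    qed
  qed
qed

lemma NN_mult:
  assumes f: "f \<in> NN" and g: "g \<in> NN" shows "f * g \<in> NN"
proof -
  define I where "I = {x. \<exists>r. x = (\<Sum>i\<le>degree (f * g). r i * coeff (f * g) i)}"
  have I: "idl I" unfolding idl_def I_def
  proof (intro conjI ballI allI)
    show "0 \<in> {x. \<exists>r. x = (\<Sum>i\<le>degree (f * g). r i * coeff (f * g) i)}"
      by (auto intro!: exI[of _ "\<lambda>_. 0"])
    fix x y assume "x \<in> {x. \<exists>r. x = (\<Sum>i\<le>degree (f * g). r i * coeff (f * g) i)}"
       "y \<in> {x. \<exists>r. x = (\<Sum>i\<le>degree (f * g). r i * coeff (f * g) i)}"
    then obtain r q where "x = (\<Sum>i\<le>degree (f * g). r i * coeff (f * g) i)"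
       "y = (\<Sum>i\<le>degree (f * g). q i * coeff (f * g) i)" by auto
    thus "x + y \<in> {x. \<exists>r. x = (\<Sum>i\<le>degree (f * g). r i * coeff (f * g) i)}"
      by (auto intro!: exI[of _ "\<lambda>i. r i + q i"] simp: sum.distrib distrib_right)
  next
    fix c x assume "x \<in> {x. \<exists>r. x = (\<Sum>i\<le>degree (f * g). r i * coeff (f * g) i)}"
    then obtain r where "x = (\<Sum>i\<le>degree (f * g). r i * coeff (f * g) i)" by auto
    thus "c * x \<in> {x. \<exists>r. x = (\<Sum>i\<le>degree (f * g). r i * coeff (f * g) i)}"
      by (auto intro!: exI[of _ "\<lambda>i. c * r i"] simp: sum_distrib_left mult.assoc)
  qed
  have I0: "0 \<in> I" using I by (simp add: idl_def)
  have "cu I f" using f I0 unfolding NN_iff cu_def by force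
  moreover have "cu I g" using g I0 unfolding NN_iff cu_def by force
  moreover have "\<forall>n. coeff (f * g) n \<in> I"
  proof
    fix n show "coeff (f * g) n \<in> I"
    proof (cases "n \<le> degree (f * g)")
      case True
      have "coeff (f * g) n = (\<Sum>i\<le>degree (f * g). (if i = n then 1 else 0) * coeff (f * g) i)"
        using True by (simp add: if_distrib[of "\<lambda>r. r * _"] cong: if_cong)
      thus ?thesis unfolding I_def by (intro CollectI exI[of _ "\<lambda>i. if i = n then 1 else 0"])
    next
      case False
      hence "coeff (f * g) n = 0" by (simp add: coeff_eq_0)
      thus ?thesis using I by (simp add: idl_def)
    qed
  qed
  ultimately have "1 \<in> I" using cu_main I by blast
  then obtain r where "1 = (\<Sum>i\<le>degree (f * g). r i * coeff (f * g) i)" unfolding I_def by blast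
  thus ?thesis unfolding NN_iff by (intro exI[of _ r]) simp
qed


section \<open>Localization\<close>

lemma module_times: "module ((*) :: 'r::comm_ring_1 \<Rightarrow> 'r \<Rightarrow> 'r)"
  by unfold_locales (simp_all add: algebra_simps)

locale locm = module sm for sm :: "'r::comm_ring_1 \<Rightarrow> 'm::ab_group_add \<Rightarrow> 'm" +
  fixes T :: "'r set"
  assumes T1: "1 \<in> T" and Tmult: "u \<in> T \<Longrightarrow> v \<in> T \<Longrightarrow> u * v \<in> T"
begin

lemma R: "locm (*) T"
  unfolding locm_def locm_axioms_def using module_times T1 Tmult by blast

lemma rel_alt: "loc_rel sm T (m, u) (m', u') \<longleftrightarrow> u \<in> T \<and> u' \<in> T \<and> (\<exists>w\<in>T. sm (w * u') m = sm (w * u) m')"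
  unfolding loc_rel_def by (simp add: scale_right_diff_distrib)

lemma rel_refl: "u \<in> T \<Longrightarrow> loc_rel sm T (m, u) (m, u)"
  unfolding rel_alt using T1 by blast

lemma rel_sym: "loc_rel sm T p q \<Longrightarrow> loc_rel sm T q p"
proof (cases p; cases q)
  fix a b c d assume pq: "p = (a, b)" "q = (c, d)" and pq': "loc_rel sm T p q"
  have "loc_rel sm T (a, b) (c, d)" using pq pq' by simp
  then obtain w where "b \<in> T" "d \<in> T" "w \<in> T" "sm (w * d) a = sm (w * b) c"
    unfolding rel_alt by blast
  thus "loc_rel sm T q p" unfolding pq rel_alt by (intro conjI bexI[of _ w]) auto
qed

lemma rel_trans: "loc_rel sm T p q \<Longrightarrow> loc_rel sm T q r \<Longrightarrow> loc_rel sm T p r"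
proof (cases p; cases q; cases r)
  fix m u m' u' m'' u''
  assume pqr: "p = (m, u)" "q = (m', u')" "r = (m'', u'')"
  assume "loc_rel sm T p q" "loc_rel sm T q r"
  then obtain w1 w2 where T: "u \<in> T" "u' \<in> T" "u'' \<in> T" "w1 \<in> T" "w2 \<in> T"
    and e1: "sm (w1 * u') m = sm (w1 * u) m'" and e2: "sm (w2 * u'') m' = sm (w2 * u') m''"
    unfolding pqr rel_alt by blast
  have "sm ((w1 * w2 * u') * u'') m = sm (w2 * u'') (sm (w1 * u') m)" by (simp add: ac_simps)
  also have "\<dots> = sm (w2 * u'') (sm (w1 * u) m')" by (simp only: e1)
  also have "\<dots> = sm (w1 * u) (sm (w2 * u'') m')" by (simp add: ac_simps)
  also have "\<dots> = sm (w1 * u) (sm (w2 * u') m'')" by (simp only: e2)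
  also have "\<dots> = sm ((w1 * w2 * u') * u) m''" by (simp add: ac_simps)
  finally have "sm ((w1 * w2 * u') * u'') m = sm ((w1 * w2 * u') * u) m''" .
  moreover have "w1 * w2 * u' \<in> T" using T Tmult by blast
  ultimately show "loc_rel sm T p r" unfolding pqr rel_alt using T by blast
qed

lemma mem_cls: "q \<in> loc_cls sm T m u \<longleftrightarrow> loc_rel sm T (m, u) q"
  by (simp add: loc_cls_def)

lemma cls_eq: "u \<in> T \<Longrightarrow> u' \<in> T \<Longrightarrow>
   loc_cls sm T m u = loc_cls sm T m' u' \<longleftrightarrow> loc_rel sm T (m, u) (m', u')"
proof
  assume "u \<in> T" "u' \<in> T" "loc_cls sm T m u = loc_cls sm T m' u'"
  have "(m', u') \<in> loc_cls sm T m' u'" using rel_refl[of u' m'] \<open>u' \<in> T\<close> by (simp add: mem_cls)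
  hence "(m', u') \<in> loc_cls sm T m u" using \<open>loc_cls sm T m u = loc_cls sm T m' u'\<close> by simp
  thus "loc_rel sm T (m, u) (m', u')" by (simp add: mem_cls)
next
  assume "loc_rel sm T (m, u) (m', u')"
  thus "loc_cls sm T m u = loc_cls sm T m' u'"
    unfolding loc_cls_def using rel_sym rel_trans by blast
qed

lemma cls_carrier: "u \<in> T \<Longrightarrow> loc_cls sm T m u \<in> loc_carrier sm T"
  unfolding loc_carrier_def by blast

lemma rep_cls: "u \<in> T \<Longrightarrow> loc_rel sm T (m, u) (loc_rep (loc_cls sm T m u))"
proof -
  assume u: "u \<in> T"
  have "(m, u) \<in> loc_cls sm T m u" using rel_refl[OF u] by (simp add: mem_cls)
  hence "loc_rep (loc_cls sm T m u) \<in> loc_cls sm T m u" unfolding loc_rep_def by (rule someI)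
  thus ?thesis by (simp add: mem_cls)
qed

lemma carrier_rep: "A \<in> loc_carrier sm T \<Longrightarrow>
  \<exists>m u. u \<in> T \<and> loc_rep A = (m, u) \<and> A = loc_cls sm T m u"
proof -
  assume "A \<in> loc_carrier sm T"
  then obtain m u where A: "A = loc_cls sm T m u" "u \<in> T" unfolding loc_carrier_def by blast
  obtain m' u' where r: "loc_rep A = (m', u')" by (cases "loc_rep A")
  have rel: "loc_rel sm T (m, u) (m', u')" using rep_cls[OF A(2), of m] r A(1) by simp
  hence "u' \<in> T" by (simp add: rel_alt)
  moreover have "A = loc_cls sm T m' u'" using A rel cls_eq \<open>u' \<in> T\<close> by blast
  ultimately show ?thesis using r by blast
qed

lemma cls_cases:
  assumes "A \<in> loc_carrier sm T"
  obtains m u where "u \<in> T" "A = loc_cls sm T m u"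
  using assms unfolding loc_carrier_def by blast

lemma add_cls: "u \<in> T \<Longrightarrow> v \<in> T \<Longrightarrow>
  loc_add sm T (loc_cls sm T m u) (loc_cls sm T n v) = loc_cls sm T (sm v m + sm u n) (u * v)"
proof -
  assume u: "u \<in> T" and v: "v \<in> T"
  obtain m1 u1 where r1: "loc_rep (loc_cls sm T m u) = (m1, u1)" by (cases "loc_rep (loc_cls sm T m u)")
  obtain n1 v1 where r2: "loc_rep (loc_cls sm T n v) = (n1, v1)" by (cases "loc_rep (loc_cls sm T n v)")
  have "loc_rel sm T (m, u) (m1, u1)" using rep_cls[OF u, of m] r1 by simp
  then obtain w1 where T1': "u1 \<in> T" "w1 \<in> T" and e1: "sm (w1 * u1) m = sm (w1 * u) m1"
    unfolding rel_alt by blast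
  have "loc_rel sm T (n, v) (n1, v1)" using rep_cls[OF v, of n] r2 by simp
  then obtain w2 where T2': "v1 \<in> T" "w2 \<in> T" and e2: "sm (w2 * v1) n = sm (w2 * v) n1"
    unfolding rel_alt by blast
  have a1: "sm (w1 * w2 * (u * v)) (sm v1 m1) = sm (w1 * w2 * (u1 * v1)) (sm v m)"
  proof -
    have "sm (w1 * w2 * (u1 * v1)) (sm v m) = sm (w2 * v1 * v) (sm (w1 * u1) m)" by (simp add: ac_simps)
    also have "\<dots> = sm (w2 * v1 * v) (sm (w1 * u) m1)" by (simp only: e1)
    also have "\<dots> = sm (w1 * w2 * (u * v)) (sm v1 m1)" by (simp add: ac_simps)
    finally show ?thesis by simp
  qed
  have a2: "sm (w1 * w2 * (u * v)) (sm u1 n1) = sm (w1 * w2 * (u1 * v1)) (sm u n)"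
  proof -
    have "sm (w1 * w2 * (u1 * v1)) (sm u n) = sm (w1 * u1 * u) (sm (w2 * v1) n)" by (simp add: ac_simps)
    also have "\<dots> = sm (w1 * u1 * u) (sm (w2 * v) n1)" by (simp only: e2)
    also have "\<dots> = sm (w1 * w2 * (u * v)) (sm u1 n1)" by (simp add: ac_simps)
    finally show ?thesis by simp
  qed
  have "loc_rel sm T (sm v1 m1 + sm u1 n1, u1 * v1) (sm v m + sm u n, u * v)"
    unfolding rel_alt using a1 a2 T1' T2' u v Tmult
    by (intro conjI bexI[of _ "w1 * w2"]) (auto simp: scale_right_distrib)
  hence "loc_cls sm T (sm v1 m1 + sm u1 n1) (u1 * v1) = loc_cls sm T (sm v m + sm u n) (u * v)"
    using cls_eq T1' T2' u v Tmult by blast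
  thus ?thesis unfolding loc_add_def r1 r2 by simp
qed

lemma act_cls: "u \<in> T \<Longrightarrow> v \<in> T \<Longrightarrow>
  loc_act sm T (loc_cls (*) T f u) (loc_cls sm T m v) = loc_cls sm T (sm f m) (u * v)"
proof -
  assume u: "u \<in> T" and v: "v \<in> T"
  obtain f1 u1 where r1: "loc_rep (loc_cls (*) T f u) = (f1, u1)" by (cases "loc_rep (loc_cls (*) T f u)")
  obtain m1 v1 where r2: "loc_rep (loc_cls sm T m v) = (m1, v1)" by (cases "loc_rep (loc_cls sm T m v)")
  have "loc_rel (*) T (f, u) (f1, u1)" using locm.rep_cls[OF R u, of f] r1 by simp
  then obtain w1 where T1': "u1 \<in> T" "w1 \<in> T" and e1: "(w1 * u1) * f = (w1 * u) * f1"
    unfolding locm.rel_alt[OF R] by blast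
  have "loc_rel sm T (m, v) (m1, v1)" using rep_cls[OF v, of m] r2 by simp
  then obtain w2 where T2': "v1 \<in> T" "w2 \<in> T" and e2: "sm (w2 * v1) m = sm (w2 * v) m1"
    unfolding rel_alt by blast
  have a: "sm (w1 * w2 * (u * v)) (sm f1 m1) = sm (w1 * w2 * (u1 * v1)) (sm f m)"
  proof -
    have "sm (w1 * w2 * (u1 * v1)) (sm f m) = sm ((w1 * u1 * f) * w2 * v1) m"
      unfolding scale_scale by (rule arg_cong[of _ _ "\<lambda>a. sm a m"]) (simp add: ac_simps)
    also have "\<dots> = sm ((w1 * u * f1) * w2 * v1) m" by (simp only: e1)
    also have "\<dots> = sm (w1 * u * f1) (sm (w2 * v1) m)"
      unfolding scale_scale by (rule arg_cong[of _ _ "\<lambda>a. sm a m"]) (simp add: ac_simps)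
    also have "\<dots> = sm (w1 * u * f1) (sm (w2 * v) m1)" by (simp only: e2)
    also have "\<dots> = sm (w1 * w2 * (u * v)) (sm f1 m1)"
      unfolding scale_scale by (rule arg_cong[of _ _ "\<lambda>a. sm a m1"]) (simp add: ac_simps)
    finally show ?thesis by simp
  qed
  have "loc_rel sm T (sm f1 m1, u1 * v1) (sm f m, u * v)"
    unfolding rel_alt using a T1' T2' u v Tmult
    by (intro conjI bexI[of _ "w1 * w2"]) auto
  hence "loc_cls sm T (sm f1 m1) (u1 * v1) = loc_cls sm T (sm f m) (u * v)"
    using cls_eq T1' T2' u v Tmult by blast
  thus ?thesis unfolding loc_act_def r1 r2 by simp
qed

lemma C_sub: "is_submodule (loc_carrier (*) T) (loc_act sm T) (loc_add sm T) (loc_zero sm T)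
   (loc_carrier sm T) (loc_carrier sm T)"
  unfolding is_submodule_def
proof (intro conjI ballI subset_refl)
  show "loc_zero sm T \<in> loc_carrier sm T" unfolding loc_zero_def using T1 by (rule cls_carrier)
  fix x y assume x: "x \<in> loc_carrier sm T" and y: "y \<in> loc_carrier sm T"
  obtain m u where mu: "u \<in> T" "x = loc_cls sm T m u" using x by (rule cls_cases)
  obtain n v where nv: "v \<in> T" "y = loc_cls sm T n v" using y by (rule cls_cases)
  show "loc_add sm T x y \<in> loc_carrier sm T"
    unfolding mu(2) nv(2) add_cls[OF mu(1) nv(1)] using Tmult[OF mu(1) nv(1)] by (rule cls_carrier)
next
  fix r x assume r: "r \<in> loc_carrier (*) T" and x: "x \<in> loc_carrier sm T"
  obtain f u where fu: "u \<in> T" "r = loc_cls (*) T f u" using r by (rule locm.cls_cases[OF R])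
  obtain n v where nv: "v \<in> T" "x = loc_cls sm T n v" using x by (rule cls_cases)
  show "loc_act sm T r x \<in> loc_carrier sm T"
    unfolding fu(2) nv(2) act_cls[OF fu(1) nv(1)] using Tmult[OF fu(1) nv(1)] by (rule cls_carrier)
qed

end


section \<open>The localized module\<close>

sublocale pmod \<subseteq> L: locm "pscale scale" NN
  by unfold_locales (auto simp: one_NN NN_mult)

context pmod
begin

abbreviation "LS L \<equiv> is_submodule (loc_carrier (*) NN) (loc_act ps NN) (loc_add ps NN) (loc_zero ps NN) (loc_carrier ps NN) L"
abbreviation "LG G \<equiv> gen_submodule (loc_carrier (*) NN) (loc_act ps NN) (loc_add ps NN) (loc_zero ps NN) (loc_carrier ps NN) G"

lemma rc_carrier: "u \<in> NN \<Longrightarrow> loc_cls (*) NN f u \<in> loc_carrier (*) NN"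
  unfolding loc_carrier_def by blast

lemma LS_act: "LS L' \<Longrightarrow> r \<in> loc_carrier (*) NN \<Longrightarrow> x \<in> L' \<Longrightarrow> loc_act ps NN r x \<in> L'"
  unfolding is_submodule_def by blast

lemma LS_add: "LS L' \<Longrightarrow> x \<in> L' \<Longrightarrow> y \<in> L' \<Longrightarrow> loc_add ps NN x y \<in> L'"
  unfolding is_submodule_def by blast

lemma pull_sub: assumes L': "LS L'" shows "P.subspace {m. loc_cls ps NN m 1 \<in> L'}"
  unfolding P.subspace_def
proof (intro conjI ballI allI)
  show "0 \<in> {m. loc_cls ps NN m 1 \<in> L'}" using L' by (simp add: is_submodule_def loc_zero_def)
  fix x y assume "x \<in> {m. loc_cls ps NN m 1 \<in> L'}" "y \<in> {m. loc_cls ps NN m 1 \<in> L'}"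
  hence "loc_add ps NN (loc_cls ps NN x 1) (loc_cls ps NN y 1) \<in> L'" using L' by (simp add: is_submodule_def)
  thus "x + y \<in> {m. loc_cls ps NN m 1 \<in> L'}" by (simp add: L.add_cls one_NN)
next
  fix c x assume "x \<in> {m. loc_cls ps NN m 1 \<in> L'}"
  hence "loc_act ps NN (loc_cls (*) NN c 1) (loc_cls ps NN x 1) \<in> L'"
    using LS_act[OF L' rc_carrier[OF one_NN]] by simp
  thus "ps c x \<in> {m. loc_cls ps NN m 1 \<in> L'}" by (simp add: L.act_cls one_NN)
qed

lemma two_imp_three:
  assumes SN2: "S_Noetherian UNIV ps (+) 0 UNIV ((\<lambda>s. [:s:]) ` S)"
  shows "S_Noetherian (loc_carrier (*) NN) (loc_act ps NN) (loc_add ps NN) (loc_zero ps NN)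
              (loc_carrier ps NN) ((\<lambda>s. loc_cls (*) NN [:s:] 1) ` S)"
  unfolding S_Noetherian_def S_finite_def
proof (intro allI impI)
  fix L' assume L': "LS L'"
  define Pb where "Pb = {m. loc_cls ps NN m 1 \<in> L'}"
  have Pb: "P.subspace Pb" unfolding Pb_def using L' by (rule pull_sub)
  from SN2[unfolded P.SN_UNIV, rule_format, OF Pb] obtain s G where
    s: "s \<in> S" and G: "finite G" "ps [:s:] ` Pb \<subseteq> P.span G" "P.span G \<subseteq> Pb" by blast
  define G' where "G' = (\<lambda>g. loc_cls ps NN g 1) ` G"
  have G'C: "G' \<subseteq> loc_carrier ps NN" unfolding G'_def using L.cls_carrier[OF one_NN] by blast
  have G'L: "G' \<subseteq> L'" unfolding G'_def using G(3) P.span_superset unfolding Pb_def by blast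
  define F' where "F' = LG G'"
  have F'sub: "LS F'" unfolding F'_def by (rule gen_sub(1)[OF L.C_sub G'C])
  have G'F: "G' \<subseteq> F'" unfolding F'_def by (rule gen_sub(2)[OF L.C_sub G'C])
  have F'L: "F' \<subseteq> L'" unfolding F'_def by (rule gen_sub(3)[OF L.C_sub G'C L' G'L])
  have Q: "P.span G \<subseteq> {m. loc_cls ps NN m 1 \<in> F'}"
    by (rule P.span_minimal) (use G'F in \<open>auto simp: G'_def intro: pull_sub[OF F'sub]\<close>)
  have main: "loc_act ps NN (loc_cls (*) NN [:s:] 1) ` L' \<subseteq> F'"
  proof safe
    fix x assume x: "x \<in> L'"
    hence "x \<in> loc_carrier ps NN" using L' by (auto simp: is_submodule_def)
    then obtain m u where u: "u \<in> NN" and xm: "x = loc_cls ps NN m u" by (rule L.cls_cases)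
    have "loc_act ps NN (loc_cls (*) NN u 1) x = loc_cls ps NN (ps u m) (1 * u)"
      unfolding xm by (rule L.act_cls[OF one_NN u])
    also have "\<dots> = loc_cls ps NN m 1"
      using L.cls_eq[OF u one_NN, of "ps u m" m] one_NN u unfolding L.rel_alt
      by (auto intro!: bexI[of _ 1])
    finally have "loc_cls ps NN m 1 \<in> L'"
      using LS_act[OF L' rc_carrier[OF one_NN, of u] x] by simp
    hence "m \<in> Pb" by (simp add: Pb_def)
    hence "loc_cls ps NN (ps [:s:] m) 1 \<in> F'" using G(2) Q by blast
    hence "loc_act ps NN (loc_cls (*) NN 1 u) (loc_cls ps NN (ps [:s:] m) 1) \<in> F'"
      using LS_act[OF F'sub rc_carrier[OF u, of 1]] by blast
    moreover have "loc_act ps NN (loc_cls (*) NN 1 u) (loc_cls ps NN (ps [:s:] m) 1)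
       = loc_act ps NN (loc_cls (*) NN [:s:] 1) x"
      unfolding xm L.act_cls[OF u one_NN] L.act_cls[OF one_NN u] by simp
    ultimately show "loc_act ps NN (loc_cls (*) NN [:s:] 1) x \<in> F'" by simp
  qed
  have "fg_submodule (loc_carrier (*) NN) (loc_act ps NN) (loc_add ps NN) (loc_zero ps NN) (loc_carrier ps NN) F'"
    unfolding fg_submodule_def F'_def using G(1) G'C unfolding G'_def by blast
  thus "\<exists>s\<in>(\<lambda>s. loc_cls (*) NN [:s:] 1) ` S. \<exists>F. fg_submodule (loc_carrier (*) NN) (loc_act ps NN)
      (loc_add ps NN) (loc_zero ps NN) (loc_carrier ps NN) F \<and> loc_act ps NN s ` L' \<subseteq> F \<and> F \<subseteq> L'"
    using main F'L s by blast
qed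


definition Lext :: "'b set \<Rightarrow> ('b poly \<times> 'a poly) set set" where
  "Lext K = {x. \<exists>q u. u \<in> NN \<and> x = loc_cls ps NN q u \<and> (\<forall>n. coeff q n \<in> K)}"

lemma ext_sub: assumes K: "subspace K" shows "LS (Lext K)"
  unfolding is_submodule_def
proof (intro conjI ballI subsetI)
  have PK: "P.subspace {p. \<forall>n. coeff p n \<in> K}" by (rule polyK[OF K])
  fix x assume "x \<in> Lext K"
  then obtain q u where "u \<in> NN" "x = loc_cls ps NN q u" unfolding Lext_def by blast
  thus "x \<in> loc_carrier ps NN" using L.cls_carrier by blast
next
  show "loc_zero ps NN \<in> Lext K" unfolding Lext_def loc_zero_def using one_NN subspace_0[OF K]
    by (intro CollectI exI[of _ 0] exI[of _ 1]) auto
next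
  have PK: "P.subspace {p. \<forall>n. coeff p n \<in> K}" by (rule polyK[OF K])
  fix x y assume "x \<in> Lext K" "y \<in> Lext K"
  then obtain q u q' u' where qu: "u \<in> NN" "x = loc_cls ps NN q u" "\<forall>n. coeff q n \<in> K"
    "u' \<in> NN" "y = loc_cls ps NN q' u'" "\<forall>n. coeff q' n \<in> K" unfolding Lext_def by blast
  have "ps u' q + ps u q' \<in> {p. \<forall>n. coeff p n \<in> K}"
    using qu PK by (intro P.subspace_add P.subspace_scale) auto
  moreover have "loc_add ps NN x y = loc_cls ps NN (ps u' q + ps u q') (u * u')"
    unfolding qu(2,5) by (rule L.add_cls[OF qu(1,4)])
  ultimately show "loc_add ps NN x y \<in> Lext K" unfolding Lext_def using NN_mult qu(1,4) by blast
next
  have PK: "P.subspace {p. \<forall>n. coeff p n \<in> K}" by (rule polyK[OF K])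
  fix r :: "('a poly \<times> 'a poly) set" and x assume r: "r \<in> loc_carrier (*) NN" and "x \<in> Lext K"
  then obtain q u where qu: "u \<in> NN" "x = loc_cls ps NN q u" "\<forall>n. coeff q n \<in> K"
    unfolding Lext_def by blast
  obtain f v where fv: "v \<in> NN" "r = loc_cls (*) NN f v" using r unfolding loc_carrier_def by blast
  have "ps f q \<in> {p. \<forall>n. coeff p n \<in> K}"
    using qu PK by (intro P.subspace_scale) auto
  moreover have "loc_act ps NN r x = loc_cls ps NN (ps f q) (v * u)"
    unfolding qu(2) fv(2) by (rule L.act_cls[OF fv(1) qu(1)])
  ultimately show "loc_act ps NN r x \<in> Lext K" unfolding Lext_def using NN_mult qu(1) fv(1) by blast
qed

lemma ext_contr:
  assumes K: "subspace K" and m: "loc_cls ps NN [:m:] 1 \<in> Lext K"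
  shows "m \<in> K"
proof -
  have PK: "P.subspace {p. \<forall>n. coeff p n \<in> K}" by (rule polyK[OF K])
  from m obtain q u where qu: "u \<in> NN" "loc_cls ps NN [:m:] 1 = loc_cls ps NN q u" "\<forall>n. coeff q n \<in> K"
    unfolding Lext_def by blast
  from qu(2) L.cls_eq[OF one_NN qu(1)] obtain w where w: "w \<in> NN" "ps (w * u) [:m:] = ps (w * 1) q"
    unfolding L.rel_alt by blast
  define h where "h = w * u"
  have h: "h \<in> NN" unfolding h_def using NN_mult w(1) qu(1) by blast
  have "ps h [:m:] \<in> {p. \<forall>n. coeff p n \<in> K}"
    unfolding h_def w(2) using PK qu(3) by (intro P.subspace_scale) auto
  hence hi: "scale (coeff h i) m \<in> K" for i by (simp add: coeff_pscale_constR)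
  from h obtain r where r: "(\<Sum>i\<le>degree h. r i * coeff h i) = 1" unfolding NN_iff by blast
  have "m = scale (\<Sum>i\<le>degree h. r i * coeff h i) m" using r by simp
  also have "\<dots> = (\<Sum>i\<le>degree h. scale (r i) (scale (coeff h i) m))"
    by (simp add: scale_sum_left)
  also have "\<dots> \<in> K" by (rule subspace_sum[OF K]) (rule subspace_scale[OF K hi])
  finally show "m \<in> K" .
qed

lemma three_imp_one:
  assumes SN3: "S_Noetherian (loc_carrier (*) NN) (loc_act ps NN) (loc_add ps NN) (loc_zero ps NN)
              (loc_carrier ps NN) ((\<lambda>s. loc_cls (*) NN [:s:] 1) ` S)"
  shows "S_Noetherian UNIV scale (+) 0 UNIV S"
  unfolding SN_UNIV
proof (intro allI impI)
  fix L assume L: "subspace L"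
  have "S_finite (loc_carrier (*) NN) (loc_act ps NN) (loc_add ps NN) (loc_zero ps NN)
              (loc_carrier ps NN) ((\<lambda>s. loc_cls (*) NN [:s:] 1) ` S) (Lext L)"
    using SN3 ext_sub[OF L] unfolding S_Noetherian_def by blast
  then obtain s F where s: "s \<in> S" and
    F: "fg_submodule (loc_carrier (*) NN) (loc_act ps NN) (loc_add ps NN) (loc_zero ps NN) (loc_carrier ps NN) F"
    "loc_act ps NN (loc_cls (*) NN [:s:] 1) ` Lext L \<subseteq> F" "F \<subseteq> Lext L"
    unfolding S_finite_def by blast
  from F(1) obtain G' where G': "finite G'" "G' \<subseteq> loc_carrier ps NN" "F = LG G'"
    unfolding fg_submodule_def by blast
  have G'L: "G' \<subseteq> Lext L" using gen_sub(2)[OF L.C_sub G'(2)] G'(3) F(3) by blast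
  have "\<forall>g\<in>G'. \<exists>q. (\<exists>u. u \<in> NN \<and> g = loc_cls ps NN q u) \<and> (\<forall>n. coeff q n \<in> L)"
    using G'L unfolding Lext_def by blast
  hence "\<exists>qq. \<forall>g\<in>G'. (\<exists>u. u \<in> NN \<and> g = loc_cls ps NN (qq g) u) \<and> (\<forall>n. coeff (qq g) n \<in> L)"
    by (rule bchoice)
  then obtain qq where qq0: "\<forall>g\<in>G'. (\<exists>u. u \<in> NN \<and> g = loc_cls ps NN (qq g) u) \<and> (\<forall>n. coeff (qq g) n \<in> L)"
    by blast
  have qq: "\<And>g. g \<in> G' \<Longrightarrow> (\<exists>u. u \<in> NN \<and> g = loc_cls ps NN (qq g) u) \<and> (\<forall>n. coeff (qq g) n \<in> L)"
    using qq0 by blast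
  define A where "A = (\<Union>g\<in>G'. (\<lambda>n. coeff (qq g) n) ` {..degree (qq g)})"
  have fA: "finite A" unfolding A_def using G'(1) by auto
  have AL: "A \<subseteq> L" unfolding A_def using qq by auto
  have G'A: "G' \<subseteq> Lext (span A)"
  proof
    fix g assume g: "g \<in> G'"
    then obtain u where u: "u \<in> NN" "g = loc_cls ps NN (qq g) u" using qq by blast
    have "coeff (qq g) n \<in> span A" for n
    proof (cases "n \<le> degree (qq g)")
      case True thus ?thesis using g by (auto simp: A_def intro!: span_base)
    next
      case False thus ?thesis by (simp add: coeff_eq_0 span_zero)
    qed
    thus "g \<in> Lext (span A)" unfolding Lext_def using u by blast
  qed
  have FA: "F \<subseteq> Lext (span A)"
    unfolding G'(3) by (rule gen_sub(3)[OF L.C_sub G'(2) ext_sub[OF subspace_span] G'A])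
  have "scale s ` L \<subseteq> span A"
  proof safe
    fix l assume l: "l \<in> L"
    have "loc_cls ps NN [:l:] 1 \<in> Lext L" unfolding Lext_def using one_NN l subspace_0[OF L]
      by (intro CollectI exI[of _ "[:l:]"] exI[of _ 1]) (auto simp: coeff_pCons split: nat.splits)
    hence "loc_act ps NN (loc_cls (*) NN [:s:] 1) (loc_cls ps NN [:l:] 1) \<in> F" using F(2) by blast
    hence "loc_cls ps NN [:scale s l:] 1 \<in> F"
      by (simp add: L.act_cls one_NN pscale_const_const)
    thus "scale s l \<in> span A" using FA ext_contr[OF subspace_span] by blast
  qed
  moreover have "span A \<subseteq> L" using AL L by (rule span_minimal)
  ultimately show "\<exists>s\<in>S. \<exists>G. finite G \<and> scale s ` L \<subseteq> span G \<and> span G \<subseteq> L"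
    using s fA by blast
qed

end

theorem theorem2p6:
  fixes scale :: "'a::comm_ring_1 \<Rightarrow> 'b::ab_group_add \<Rightarrow> 'b"
    and S :: "'a set"
  assumes "module scale"
    and "mult_subset S"
    and "anti_Archimedean S"
  shows
   "(S_Noetherian UNIV scale (+) 0 UNIV S
       \<longleftrightarrow> S_Noetherian UNIV (pscale scale) (+) 0 UNIV ((\<lambda>s. [:s:]) ` S))
  \<and> (S_Noetherian UNIV (pscale scale) (+) 0 UNIV ((\<lambda>s. [:s:]) ` S)
       \<longleftrightarrow> S_Noetherian (loc_carrier (*) NN)
              (loc_act (pscale scale) NN) (loc_add (pscale scale) NN) (loc_zero (pscale scale) NN)
              (loc_carrier (pscale scale) NN)
              ((\<lambda>s. loc_cls (*) NN [:s:] 1) ` S))"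
proof -
  interpret pmod scale using assms(1) by (simp add: pmod_def)
  have a: "S_Noetherian UNIV scale (+) 0 UNIV S \<Longrightarrow> S_Noetherian UNIV (pscale scale) (+) 0 UNIV ((\<lambda>s. [:s:]) ` S)"
    using one_imp_two assms(2,3) by blast
  have b: "S_Noetherian UNIV (pscale scale) (+) 0 UNIV ((\<lambda>s. [:s:]) ` S) \<Longrightarrow> S_Noetherian UNIV scale (+) 0 UNIV S"
    by (rule two_imp_one)
  have c: "S_Noetherian UNIV (pscale scale) (+) 0 UNIV ((\<lambda>s. [:s:]) ` S) \<Longrightarrow>
     S_Noetherian (loc_carrier (*) NN)
              (loc_act (pscale scale) NN) (loc_add (pscale scale) NN) (loc_zero (pscale scale) NN)
              (loc_carrier (pscale scale) NN)
              ((\<lambda>s. loc_cls (*) NN [:s:] 1) ` S)"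
    by (rule two_imp_three)
  have d: "S_Noetherian (loc_carrier (*) NN)
              (loc_act (pscale scale) NN) (loc_add (pscale scale) NN) (loc_zero (pscale scale) NN)
              (loc_carrier (pscale scale) NN)
              ((\<lambda>s. loc_cls (*) NN [:s:] 1) ` S) \<Longrightarrow> S_Noetherian UNIV scale (+) 0 UNIV S"
    by (rule three_imp_one)
  show ?thesis using a b c d by blast
qed

end
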